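(* Call an algebra of a signature $\sigma$ (not containing composition) \emph{representable} if it is isomorphic to a set of partial functions $B\subseteq P(X,Y)$, for some non-empty sets $X,Y$, closed under the operations of $\sigma$, each symbol interpreted by the corresponding concrete operation described in the context. Then: (1) an algebra $(A,\circ,\cap)$ is representable if and only if it is a right normal band with intersection; (2) an algebra $(A,-)$ is representable if and only if, with $x\circ y:=y-(y-x)$, $(A,\circ,-)$ is a minus-algebra; (3) an algebra $(A,-,\sqcup)$ is representable if and only if, with $x\circ y:=y-(y-x)$, it is a minus-algebra with override; (4) an algebra $(A,-,\diamond)$ is representable if and only if, with $x\circ y:=y-(y-x)$, it is a minus-algebra with update; (5) for each of the signatures $(-,\cap)$, $(-,\sqcup,\cap)$, $(-,\diamond,\cap)$, an algebra of that signature is representable if and only if, with $x\circ y:=y-(y-x)$, it satisfies the axioms of, respectively, a minus-algebra, a minus-algebra with override, a minus-algebra with update, and in addition all the axioms of a right normal band with intersection; (6) an algebra $(A,\circ,\cap,\sqcup)$ is representable if and only if it is a right normal band with intersection and override; (7) an algebra $(A,\circ,\cap,\diamond)$ is representable if and only if it is a right normal band with intersection and update.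
   Context: $P(X,Y)$ is the set of all partial functions from $X$ to $Y$ (sets of pairs). Concrete operations for $f,g\in P(X,Y)$: domain restriction $f\circ g$ is $g$ restricted to $\mathrm{dom}(f)$; minus $f-g$ is $f$ restricted to $\mathrm{dom}(f)\setminus\mathrm{dom}(g)$; intersection $f\cap g$ is set intersection; override $f\sqcup g$ equals $f(x)$ on $\mathrm{dom}(f)$, $g(x)$ on $\mathrm{dom}(g)\setminus\mathrm{dom}(f)$, undefined elsewhere; update $f\diamond g$ is $g\sqcup f$ restricted to $\mathrm{dom}(f)$. A right normal band is a semigroup $(A,\circ)$ with $x\circ x=x$ and $(x\circ y)\circ z=(y\circ x)\circ z$. A right normal band with intersection $(A,\circ,\cap)$: $(A,\circ)$ a right normal band, $(A,\cap)$ a semilattice, $(x\cap y)\circ x=x\cap y$, $x\circ(y\cap z)=(x\circ y)\cap z$. A minus-algebra $(A,\circ,-)$ satisfies: $x\circ y=y-(y-x)$; $(A,\circ)$ is a right normal band; there is $0$ with $x-x=0$ for all $x$; $x\circ0=0\circ x=0$; $(x-y)\circ x=x-y$; $(x-y)\circ y=0$; $(x-y)\circ z=(x\circ z)-y$; and the quasi-identity $s-x=t-x\ \&\ x\circ s=x\circ t\Rightarrow s=t$. A minus-algebra with override is a minus-algebra with a binary operation $\sqcup$ satisfying $(x\sqcup y)-x=y-x$ and $x\circ(x\sqcup y)=x$. A minus-algebra with update is a minus-algebra with a binary operation $\diamond$ satisfying $(x\diamond y)-x=x-(x\diamond y)=0$, $((x\diamond y)-y)\circ x=(x\diamond y)-y$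 and $x\circ y=y\circ(x\diamond y)$. A right normal band with intersection and override $(A,\circ,\cap,\sqcup)$: a right normal band with intersection satisfying $s\circ(s\sqcup t)=s$, $((s\sqcup t)\cap t)\sqcup s=s\sqcup t$, $(s\sqcup t)\circ u=(s\circ u)\sqcup(t\circ u)$. A right normal band with intersection and update $(A,\circ,\cap,\diamond)$: a right normal band with intersection satisfying $s=(s\diamond t)\circ s$, $s\diamond t=s\diamond(s\diamond t)$, $s\circ t=t\circ(s\diamond t)$ and the quasi-identity $(x\cap(x\diamond y))\circ a=(x\cap(x\diamond y))\circ b\ \&\ y\circ a=y\circ b\Rightarrow x\circ a=x\circ b$. *)

theory Defs
  imports Main
begin

text \<open>A partial function from X to Y is modelled as a map 'x \<rightharpoonup> 'y whose
domain lies in X and whose range lies in Y.\<close>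

datatype pfop = PRes | PMinus | PInter | POvr | PUpd

text \<open>PRes: f \<circ> g = g restricted to dom f;  PMinus: f - g = f restricted to
dom f \ dom g;  PInter: set intersection of graphs;  POvr: f \<squnion> g
(f takes priority);  PUpd: f \<diamond> g = (g \<squnion> f) restricted to dom f.\<close>

fun pf_op :: "pfop \<Rightarrow> ('x \<rightharpoonup> 'y) \<Rightarrow> ('x \<rightharpoonup> 'y) \<Rightarrow> ('x \<rightharpoonup> 'y)" where
  "pf_op PRes f g = g |` dom f"
| "pf_op PMinus f g = f |` (dom f - dom g)"
| "pf_op PInter f g = (\<lambda>x. if f x = g x then f x else None)"
| "pf_op POvr f g = g ++ f"
| "pf_op PUpd f g = (f ++ g) |` dom f"

text \<open>An algebra on the type 'a with the listed binary operations (each tagged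
with the concrete operation that interprets it) is representable over
point type 'x and value type 'y if it is isomorphic (via h) to a set of
partial functions from some non-empty X :: 'x set to some non-empty
Y :: 'y set, closed under the operations (closure of the image of h is
implied by h being a homomorphism).\<close>

definition representable_in ::
  "'x itself \<Rightarrow> 'y itself \<Rightarrow> (pfop \<times> ('a \<Rightarrow> 'a \<Rightarrow> 'a)) list \<Rightarrow> bool" where
  "representable_in _ _ ops \<longleftrightarrow>
     (\<exists>(X::'x set) (Y::'y set) (h::'a \<Rightarrow> ('x \<rightharpoonup> 'y)).
        X \<noteq> {} \<and> Y \<noteq> {} \<and> inj h \<and>
        (\<forall>a. dom (h a) \<subseteq> X \<and> ran (h a) \<subseteq> Y) \<and>
        (\<forall>(s, f) \<in> set ops. \<forall>a b. h (f a b) = pf_op s (h a) (h b)))"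

definition rnb :: "('a \<Rightarrow> 'a \<Rightarrow> 'a) \<Rightarrow> bool" where
  "rnb c \<longleftrightarrow> (\<forall>x y z. c (c x y) z = c x (c y z)) \<and> (\<forall>x. c x x = x) \<and>
             (\<forall>x y z. c (c x y) z = c (c y x) z)"

definition semilattice_op :: "('a \<Rightarrow> 'a \<Rightarrow> 'a) \<Rightarrow> bool" where
  "semilattice_op i \<longleftrightarrow> (\<forall>x y z. i (i x y) z = i x (i y z)) \<and>
      (\<forall>x y. i x y = i y x) \<and> (\<forall>x. i x x = x)"

definition rnb_int :: "('a \<Rightarrow> 'a \<Rightarrow> 'a) \<Rightarrow> ('a \<Rightarrow> 'a \<Rightarrow> 'a) \<Rightarrow> bool" where
  "rnb_int c i \<longleftrightarrow> rnb c \<and> semilattice_op i \<and>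
      (\<forall>x y. c (i x y) x = i x y) \<and>
      (\<forall>x y z. c x (i y z) = i (c x y) z)"

definition minus_alg :: "('a \<Rightarrow> 'a \<Rightarrow> 'a) \<Rightarrow> ('a \<Rightarrow> 'a \<Rightarrow> 'a) \<Rightarrow> bool" where
  "minus_alg c m \<longleftrightarrow>
     (\<forall>x y. c x y = m y (m y x)) \<and> rnb c \<and>
     (\<exists>z. (\<forall>x. m x x = z) \<and> (\<forall>x. c x z = z \<and> c z x = z) \<and>
          (\<forall>x y. c (m x y) y = z)) \<and>
     (\<forall>x y. c (m x y) x = m x y) \<and>
     (\<forall>x y z. c (m x y) z = m (c x z) y) \<and>
     (\<forall>s t x. m s x = m t x \<and> c x s = c x t \<longrightarrow> s = t)"

text \<open>In the extensions, the constant 0 of a minus-algebra is written as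
m x x (which equals 0 for every x).\<close>

definition minus_alg_ovr ::
  "('a \<Rightarrow> 'a \<Rightarrow> 'a) \<Rightarrow> ('a \<Rightarrow> 'a \<Rightarrow> 'a) \<Rightarrow> ('a \<Rightarrow> 'a \<Rightarrow> 'a) \<Rightarrow> bool" where
  "minus_alg_ovr c m ov \<longleftrightarrow> minus_alg c m \<and>
     (\<forall>x y. m (ov x y) x = m y x) \<and> (\<forall>x y. c x (ov x y) = x)"

definition minus_alg_upd ::
  "('a \<Rightarrow> 'a \<Rightarrow> 'a) \<Rightarrow> ('a \<Rightarrow> 'a \<Rightarrow> 'a) \<Rightarrow> ('a \<Rightarrow> 'a \<Rightarrow> 'a) \<Rightarrow> bool" where
  "minus_alg_upd c m up \<longleftrightarrow> minus_alg c m \<and>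
     (\<forall>x y. m (up x y) x = m x x \<and> m x (up x y) = m x x) \<and>
     (\<forall>x y. c (m (up x y) y) x = m (up x y) y) \<and>
     (\<forall>x y. c x y = c y (up x y))"

definition rnb_int_ovr ::
  "('a \<Rightarrow> 'a \<Rightarrow> 'a) \<Rightarrow> ('a \<Rightarrow> 'a \<Rightarrow> 'a) \<Rightarrow> ('a \<Rightarrow> 'a \<Rightarrow> 'a) \<Rightarrow> bool" where
  "rnb_int_ovr c i ov \<longleftrightarrow> rnb_int c i \<and>
     (\<forall>s t. c s (ov s t) = s) \<and>
     (\<forall>s t. ov (i (ov s t) t) s = ov s t) \<and>
     (\<forall>s t u. c (ov s t) u = ov (c s u) (c t u))"

definition rnb_int_upd ::
  "('a \<Rightarrow> 'a \<Rightarrow> 'a) \<Rightarrow> ('a \<Rightarrow> 'a \<Rightarrow> 'a) \<Rightarrow> ('a \<Rightarrow> 'a \<Rightarrow> 'a) \<Rightarrow> bool" where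
  "rnb_int_upd c i up \<longleftrightarrow> rnb_int c i \<and>
     (\<forall>s t. s = c (up s t) s) \<and>
     (\<forall>s t. up s t = up s (up s t)) \<and>
     (\<forall>s t. c s t = c t (up s t)) \<and>
     (\<forall>x y a b. c (i x (up x y)) a = c (i x (up x y)) b \<and> c y a = c y b
                 \<longrightarrow> c x a = c x b)"

definition comp_of_minus :: "('a \<Rightarrow> 'a \<Rightarrow> 'a) \<Rightarrow> 'a \<Rightarrow> 'a \<Rightarrow> 'a" where
  "comp_of_minus m x y = m y (m y x)"

end

theory Submission
  imports Defs
begin


fun pt_op :: "pfop \<Rightarrow> 'y option \<Rightarrow> 'y option \<Rightarrow> 'y option" where
  "pt_op PRes u v = (if u = None then None else v)"
| "pt_op PMinus u v = (if v = None then u else None)"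
| "pt_op PInter u v = (if u = v then u else None)"
| "pt_op POvr u v = (case u of None \<Rightarrow> v | Some y \<Rightarrow> Some y)"
| "pt_op PUpd u v = (if u = None then None else (case v of None \<Rightarrow> u | Some y \<Rightarrow> Some y))"

lemma pf_op_pt: "pf_op s f g x = pt_op s (f x) (g x)"
  by (cases s) (auto simp: restrict_map_def map_add_def dom_def split: option.splits)

lemma pt_op_None: "pt_op s None None = None"
  by (cases s) auto

lemma rep_D:
  assumes "representable_in (TX::'x itself) (TY::'y itself) ops"
  obtains h :: "'a \<Rightarrow> ('x \<rightharpoonup> 'y)" where "inj h"
    "\<And>s f a b x. (s, f) \<in> set ops \<Longrightarrow> h (f a b) x = pt_op s (h a x) (h b x)"
proof -
  from assms obtain h :: "'a \<Rightarrow> ('x \<rightharpoonup> 'y)" where "inj h"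
    and H: "\<forall>(s, f) \<in> set ops. \<forall>a b. h (f a b) = pf_op s (h a) (h b)"
    unfolding representable_in_def by blast
  show thesis
  proof (rule that[OF \<open>inj h\<close>])
    fix s f a b x assume "(s, f) \<in> set ops"
    then have "h (f a b) = pf_op s (h a) (h b)" using H by blast
    then show "h (f a b) x = pt_op s (h a x) (h b x)" by (simp add: pf_op_pt)
  qed
qed

definition homs :: "(pfop \<times> ('a \<Rightarrow> 'a \<Rightarrow> 'a)) list \<Rightarrow> ('a \<Rightarrow> 'a option) \<Rightarrow> bool" where
  "homs ops \<phi> \<longleftrightarrow> (\<forall>(s, f) \<in> set ops. \<forall>a b. \<phi> (f a b) = pt_op s (\<phi> a) (\<phi> b))"

lemma rep_I:
  assumes sep: "\<And>s t::'a. s \<noteq> t \<Longrightarrow> \<exists>\<phi>. homs ops \<phi> \<and> \<phi> s \<noteq> \<phi> t"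
  shows "representable_in TYPE('a \<times> 'a) TYPE('a) ops"
proof -
  define P where "P s t \<phi> \<longleftrightarrow> homs ops \<phi> \<and> \<phi> s \<noteq> \<phi> t" for s t :: 'a and \<phi>
  define \<Phi> where "\<Phi> s t = (if s = t then (\<lambda>_. None) else (SOME \<phi>. P s t \<phi>))" for s t :: 'a
  have hom: "homs ops (\<Phi> s t)" for s t
  proof (cases "s = t")
    case True
    then show ?thesis unfolding \<Phi>_def homs_def by (auto simp: pt_op_None)
  next
    case False
    have "P s t (SOME \<phi>. P s t \<phi>)" using sep[OF False] unfolding P_def by (rule someI_ex)
    then show ?thesis using False unfolding \<Phi>_def P_def by simp
  qed
  have sp: "\<Phi> s t s \<noteq> \<Phi> s t t" if "s \<noteq> t" for s t
  proof -
    have "P s t (SOME \<phi>. P s t \<phi>)" using sep[OF that] unfolding P_def by (rule someI_ex)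
    then show ?thesis using that unfolding \<Phi>_def P_def by simp
  qed
  define h where "h a = (\<lambda>(s, t). \<Phi> s t a)" for a
  have "inj h"
  proof (rule injI)
    fix a b assume "h a = h b"
    then have "h a (a, b) = h b (a, b)" by simp
    then show "a = b" using sp[of a b] unfolding h_def by auto
  qed
  moreover have "\<forall>(s, f) \<in> set ops. \<forall>a b. h (f a b) = pf_op s (h a) (h b)"
  proof (intro ballI allI, clarify)
    fix s f a b assume "(s, f) \<in> set ops"
    then have "\<forall>u v. \<Phi> u v (f a b) = pt_op s (\<Phi> u v a) (\<Phi> u v b)"
      using hom unfolding homs_def by fast
    then show "h (f a b) = pf_op s (h a) (h b)"
      unfolding h_def by (auto simp: pf_op_pt fun_eq_iff)
  qed
  ultimately show ?thesis unfolding representable_in_def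
    by (intro exI[of _ UNIV] exI[of _ h]) auto
qed




section \<open>Right normal bands: filters and prime filters\<close>

definition lec :: "('a \<Rightarrow> 'a \<Rightarrow> 'a) \<Rightarrow> 'a \<Rightarrow> 'a \<Rightarrow> bool" where
  "lec c x y \<longleftrightarrow> c y x = x"

definition Cov :: "('a \<Rightarrow> 'a \<Rightarrow> 'a) \<Rightarrow> 'a \<Rightarrow> 'a \<Rightarrow> 'a \<Rightarrow> bool" where
  "Cov c a p q \<longleftrightarrow> (\<forall>z z'. c p z = c p z' \<and> c q z = c q z' \<longrightarrow> c a z = c a z')"

definition filt :: "('a \<Rightarrow> 'a \<Rightarrow> 'a) \<Rightarrow> 'a set \<Rightarrow> bool" where
  "filt c F \<longleftrightarrow> (\<forall>a b. c a b \<in> F \<longleftrightarrow> a \<in> F \<and> b \<in> F)"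

definition primeF :: "('a \<Rightarrow> 'a \<Rightarrow> 'a) \<Rightarrow> 'a set \<Rightarrow> bool" where
  "primeF c F \<longleftrightarrow> (\<forall>a p q. a \<in> F \<and> Cov c a p q \<longrightarrow> p \<in> F \<or> q \<in> F)"

definition idl :: "('a \<Rightarrow> 'a \<Rightarrow> 'a) \<Rightarrow> 'a set \<Rightarrow> bool" where
  "idl c I \<longleftrightarrow> (\<forall>x y. y \<in> I \<and> lec c x y \<longrightarrow> x \<in> I) \<and>
     (\<forall>a p q. Cov c a p q \<and> p \<in> I \<and> q \<in> I \<longrightarrow> a \<in> I)"

definition Zfree :: "('a \<Rightarrow> 'a \<Rightarrow> 'a) \<Rightarrow> 'a set \<Rightarrow> bool" where
  "Zfree c F \<longleftrightarrow> (\<forall>z. (\<forall>y. c z y = z \<and> c y z = z) \<longrightarrow> z \<notin> F)"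

lemma rnbD:
  assumes "rnb c"
  shows rnb_assoc: "c (c x y) z = c x (c y z)" and rnb_idem: "c x x = x"
    and rnb_rn: "c (c x y) z = c (c y x) z"
  using assms unfolding rnb_def by blast+

lemma lec_refl: "rnb c \<Longrightarrow> lec c x x"
  unfolding lec_def by (simp add: rnb_idem)

lemma lec_cl: assumes r: "rnb c" shows "lec c (c a b) a"
  unfolding lec_def using rnb_assoc[OF r, of a a b] rnb_idem[OF r, of a] by simp

lemma c_cr: assumes r: "rnb c" shows "c b (c a b) = c a b"
proof -
  have "c b (c a b) = c (c b a) b" using rnb_assoc[OF r, of b a b] by simp
  also have "\<dots> = c (c a b) b" using rnb_rn[OF r, of b a b] by simp
  also have "\<dots> = c a b" using rnb_assoc[OF r, of a b b] rnb_idem[OF r, of b] by simp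
  finally show ?thesis .
qed

lemma lec_cr: "rnb c \<Longrightarrow> lec c (c a b) b"
  unfolding lec_def by (rule c_cr)

lemma lec_trans: assumes r: "rnb c" and "lec c x y" "lec c y z" shows "lec c x z"
  using assms(2,3) rnb_assoc[OF r, of z y x] unfolding lec_def by simp

lemma lec_meet: assumes r: "rnb c" and "lec c x a" "lec c x b" shows "lec c x (c a b)"
  using assms(2,3) rnb_assoc[OF r, of a b x] unfolding lec_def by simp

lemma lec_of_nat: assumes r: "rnb c" and e: "c x y = x" shows "lec c x y"
proof -
  have "c y x = c y (c x y)" using e by simp
  also have "\<dots> = c x y" by (rule c_cr[OF r])
  finally show ?thesis using e unfolding lec_def by simp
qed

lemma lec_mono: assumes r: "rnb c" and e: "lec c x y" shows "lec c (c x p) (c y p)"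
proof -
  have "c (c y p) (c x p) = c y (c p (c x p))" by (rule rnb_assoc[OF r])
  also have "\<dots> = c y (c x p)" using c_cr[OF r, of p x] by simp
  also have "\<dots> = c (c y x) p" using rnb_assoc[OF r, of y x p] by simp
  also have "\<dots> = c x p" using e unfolding lec_def by simp
  finally show ?thesis unfolding lec_def .
qed

lemma Cov_restr: "rnb c \<Longrightarrow> Cov c a p q \<Longrightarrow> lec c x a \<Longrightarrow> Cov c x (c x p) (c x q)"
  unfolding Cov_def lec_def
proof (intro allI impI)
  fix z z'
  assume r: "rnb c" and cv: "\<forall>z z'. c p z = c p z' \<and> c q z = c q z' \<longrightarrow> c a z = c a z'"
    and xa: "c a x = x" and e: "c (c x p) z = c (c x p) z' \<and> c (c x q) z = c (c x q) z'"
  have sw: "c u (c x v) = c (c x u) v" for u v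
    using rnb_assoc[OF r, of u x v] rnb_rn[OF r, of u x v] by simp
  have "c p (c x z) = c p (c x z')" using e sw by simp
  moreover have "c q (c x z) = c q (c x z')" using e sw by simp
  ultimately have "c a (c x z) = c a (c x z')" using cv by blast
  then show "c x z = c x z'" using xa rnb_assoc[OF r, of a x] by simp
qed

lemma filt_up: assumes "filt c F" "x \<in> F" "lec c x y" shows "y \<in> F"
proof -
  have "c y x \<in> F" using assms(2,3) unfolding lec_def by simp
  then show ?thesis using assms(1) unfolding filt_def by blast
qed

lemma filt_c: "filt c F \<Longrightarrow> a \<in> F \<Longrightarrow> b \<in> F \<Longrightarrow> c a b \<in> F"
  unfolding filt_def by blast

lemma filt_principal: "rnb c \<Longrightarrow> filt c {y. lec c w y}"
  unfolding filt_def
proof (intro allI iffI)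
  fix a b assume r: "rnb c" and "c a b \<in> {y. lec c w y}"
  then have h: "lec c w (c a b)" by simp
  show "a \<in> {y. lec c w y} \<and> b \<in> {y. lec c w y}"
    using lec_trans[OF r h lec_cl[OF r]] lec_trans[OF r h lec_cr[OF r]] by simp
next
  fix a b assume r: "rnb c" and "a \<in> {y. lec c w y} \<and> b \<in> {y. lec c w y}"
  then show "c a b \<in> {y. lec c w y}" using lec_meet[OF r] by simp
qed

lemma filt_gen:
  assumes r: "rnb c" and F: "filt c F" and ne: "F \<noteq> {}"
  shows "filt c {y. \<exists>f\<in>F. lec c (c f b) y}"
  unfolding filt_def
proof (intro allI iffI)
  fix y1 y2 assume "c y1 y2 \<in> {y. \<exists>f\<in>F. lec c (c f b) y}"
  then obtain f where f: "f \<in> F" "lec c (c f b) (c y1 y2)" by blast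
  then show "y1 \<in> {y. \<exists>f\<in>F. lec c (c f b) y} \<and> y2 \<in> {y. \<exists>f\<in>F. lec c (c f b) y}"
    using lec_trans[OF r f(2) lec_cl[OF r]] lec_trans[OF r f(2) lec_cr[OF r]] by blast
next
  fix y1 y2 assume "y1 \<in> {y. \<exists>f\<in>F. lec c (c f b) y} \<and> y2 \<in> {y. \<exists>f\<in>F. lec c (c f b) y}"
  then obtain f1 f2 where f: "f1 \<in> F" "lec c (c f1 b) y1" "f2 \<in> F" "lec c (c f2 b) y2" by blast
  have "c f1 f2 \<in> F" using F f by (simp add: filt_c)
  moreover have "lec c (c (c f1 f2) b) (c f1 b)"
    by (rule lec_mono[OF r lec_cl[OF r]])
  moreover have "lec c (c (c f1 f2) b) (c f2 b)"
    by (rule lec_mono[OF r lec_cr[OF r]])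
  ultimately show "c y1 y2 \<in> {y. \<exists>f\<in>F. lec c (c f b) y}"
    using f lec_meet[OF r lec_trans[OF r _ f(2)] lec_trans[OF r _ f(4)]] by blast
qed

lemma prime_exists:
  assumes r: "rnb c" and I: "idl c I" and w: "w \<notin> I"
  shows "\<exists>F. filt c F \<and> primeF c F \<and> w \<in> F \<and> F \<inter> I = {}"
proof -
  let ?A = "{F. filt c F \<and> w \<in> F \<and> F \<inter> I = {}}"
  have idown: "x \<in> I" if "y \<in> I" "lec c x y" for x y using I that unfolding idl_def by blast
  have P0: "{y. lec c w y} \<in> ?A"
    using filt_principal[OF r, of w] lec_refl[OF r, of w] idown w by auto
  have "\<exists>M\<in>?A. \<forall>X\<in>?A. M \<subseteq> X \<longrightarrow> X = M"
  proof (rule subset_Zorn_nonempty)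
    show "?A \<noteq> {}" using P0 by blast
  next
    fix C assume Cne: "C \<noteq> {}" and ch: "subset.chain ?A C"
    then have CA: "C \<subseteq> ?A" and cmp: "\<forall>x\<in>C. \<forall>y\<in>C. x \<subseteq> y \<or> y \<subseteq> x"
      unfolding subset.chain_def by auto
    have "filt c (\<Union>C)"
      unfolding filt_def
    proof (intro allI iffI)
      fix a b assume "c a b \<in> \<Union>C"
      then obtain F where "F \<in> C" "c a b \<in> F" by blast
      then show "a \<in> \<Union>C \<and> b \<in> \<Union>C" using CA unfolding filt_def by blast
    next
      fix a b assume "a \<in> \<Union>C \<and> b \<in> \<Union>C"
      then obtain F1 F2 where "F1 \<in> C" "a \<in> F1" "F2 \<in> C" "b \<in> F2" by blast
      moreover have "filt c F1" "filt c F2" using CA \<open>F1 \<in> C\<close> \<open>F2 \<in> C\<close> by auto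
      ultimately show "c a b \<in> \<Union>C" using cmp unfolding filt_def by blast
    qed
    moreover have "w \<in> \<Union>C" using Cne CA by blast
    moreover have "\<Union>C \<inter> I = {}" using CA by blast
    ultimately show "\<Union>C \<in> ?A" by blast
  qed
  then obtain M where MA: "M \<in> ?A" and Mmax: "\<forall>X\<in>?A. M \<subseteq> X \<longrightarrow> X = M" by blast
  have Mf: "filt c M" and wM: "w \<in> M" and MI: "M \<inter> I = {}" using MA by auto
  have gen: "\<exists>f\<in>M. c f b \<in> I" if "b \<notin> M" for b
  proof (rule ccontr)
    assume nf: "\<not> (\<exists>f\<in>M. c f b \<in> I)"
    let ?G = "{y. \<exists>f\<in>M. lec c (c f b) y}"
    have "filt c ?G" using filt_gen[OF r Mf] wM by blast
    moreover have "w \<in> ?G" using wM lec_cl[OF r] by blast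
    moreover have "?G \<inter> I = {}" using nf idown by blast
    moreover have "M \<subseteq> ?G" using lec_cl[OF r] by blast
    ultimately have "?G = M" using Mmax by blast
    moreover have "b \<in> ?G" using wM lec_cr[OF r] by blast
    ultimately show False using that by blast
  qed
  have "primeF c M"
    unfolding primeF_def
  proof (intro allI impI)
    fix a p q assume aM: "a \<in> M \<and> Cov c a p q"
    show "p \<in> M \<or> q \<in> M"
    proof (rule ccontr)
      assume "\<not> (p \<in> M \<or> q \<in> M)"
      then obtain f1 f2 where f1: "f1 \<in> M" "c f1 p \<in> I" and f2: "f2 \<in> M" "c f2 q \<in> I"
        using gen by blast
      define x where "x = c a (c f1 f2)"
      have xM: "x \<in> M" unfolding x_def using Mf aM f1 f2 by (simp add: filt_c)
      have xa: "lec c x a" unfolding x_def using lec_cl[OF r] .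
      have cv: "Cov c x (c x p) (c x q)" using Cov_restr[OF r _ xa] aM by blast
      have "lec c x f1" unfolding x_def by (rule lec_trans[OF r lec_cr[OF r] lec_cl[OF r]])
      then have "c x p \<in> I" using idown f1 lec_mono[OF r] by blast
      moreover have "lec c x f2" unfolding x_def by (rule lec_trans[OF r lec_cr[OF r] lec_cr[OF r]])
      then have "c x q \<in> I" using idown f2 lec_mono[OF r] by blast
      ultimately have "x \<in> I" using I cv unfolding idl_def by blast
      then show False using xM MI by blast
    qed
  qed
  then show ?thesis using Mf wM MI by blast
qed




definition eqv :: "('a \<Rightarrow> 'a \<Rightarrow> 'a) \<Rightarrow> 'a set \<Rightarrow> 'a \<Rightarrow> 'a \<Rightarrow> bool" where
  "eqv c F a b \<longleftrightarrow> a \<in> F \<and> b \<in> F \<and> (\<exists>u\<in>F. c u a = c u b)"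

definition phi :: "('a \<Rightarrow> 'a \<Rightarrow> 'a) \<Rightarrow> 'a set \<Rightarrow> 'a \<Rightarrow> 'a option" where
  "phi c F a = (if a \<in> F then Some (SOME b. eqv c F a b) else None)"

lemma eqv_refl: "a \<in> F \<Longrightarrow> eqv c F a a"
  unfolding eqv_def by blast

lemma eqv_sym: "eqv c F a b \<Longrightarrow> eqv c F b a"
  unfolding eqv_def by metis

lemma eqv_trans:
  assumes r: "rnb c" and F: "filt c F" and ab: "eqv c F a b" and bd: "eqv c F b d"
  shows "eqv c F a d"
proof -
  obtain u v where u: "u \<in> F" "c u a = c u b" and v: "v \<in> F" "c v b = c v d"
    using ab bd unfolding eqv_def by blast
  have sw: "c (c u v) x = c v (c u x)" for x
    using rnb_assoc[OF r, of v u x] rnb_rn[OF r, of v u x] by simp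
  have sw2: "c (c u v) x = c u (c v x)" for x
    using rnb_assoc[OF r, of u v x] by simp
  have "c (c u v) a = c (c u v) d" using sw[of a] sw[of b] sw2[of b] sw2[of d] u v by simp
  moreover have "c u v \<in> F" using F u v by (simp add: filt_c)
  ultimately show ?thesis using ab bd unfolding eqv_def by blast
qed

lemma eqv_le: "rnb c \<Longrightarrow> u \<in> F \<Longrightarrow> a \<in> F \<Longrightarrow> b \<in> F \<Longrightarrow> c u a = u \<Longrightarrow> c u b = u \<Longrightarrow> eqv c F a b"
  unfolding eqv_def by metis

lemma phi_out: "a \<notin> F \<Longrightarrow> phi c F a = None"
  unfolding phi_def by simp

lemma phi_in_None: "a \<in> F \<Longrightarrow> phi c F a \<noteq> None"
  unfolding phi_def by simp

lemma phi_eq_iff: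
  assumes r: "rnb c" and F: "filt c F" and a: "a \<in> F" and b: "b \<in> F"
  shows "phi c F a = phi c F b \<longleftrightarrow> eqv c F a b"
proof -
  have sa: "eqv c F a (SOME x. eqv c F a x)" using eqv_refl[OF a] by (rule someI)
  have sb: "eqv c F b (SOME x. eqv c F b x)" using eqv_refl[OF b] by (rule someI)
  show ?thesis
  proof
    assume "phi c F a = phi c F b"
    then have "(SOME x. eqv c F a x) = (SOME x. eqv c F b x)" using a b unfolding phi_def by simp
    then show "eqv c F a b" using sa sb eqv_sym eqv_trans[OF r F] by metis
  next
    assume ab: "eqv c F a b"
    have "(\<lambda>x. eqv c F a x) = (\<lambda>x. eqv c F b x)"
      using ab eqv_sym eqv_trans[OF r F] by (metis (full_types))
    then show "phi c F a = phi c F b" using a b unfolding phi_def by simp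
  qed
qed

fun condF :: "('a \<Rightarrow> 'a \<Rightarrow> 'a) \<Rightarrow> 'a set \<Rightarrow> pfop \<Rightarrow> ('a \<Rightarrow> 'a \<Rightarrow> 'a) \<Rightarrow> bool" where
  "condF c F PRes f = (\<forall>a b. (f a b \<in> F \<longleftrightarrow> a \<in> F \<and> b \<in> F) \<and> (f a b \<in> F \<longrightarrow> eqv c F (f a b) b))"
| "condF c F PMinus f = (\<forall>a b. (f a b \<in> F \<longleftrightarrow> a \<in> F \<and> b \<notin> F) \<and> (f a b \<in> F \<longrightarrow> eqv c F (f a b) a))"
| "condF c F PInter f = (\<forall>a b. (f a b \<in> F \<longleftrightarrow> eqv c F a b) \<and> (f a b \<in> F \<longrightarrow> eqv c F (f a b) a))"
| "condF c F POvr f = (\<forall>a b. (f a b \<in> F \<longleftrightarrow> a \<in> F \<or> b \<in> F) \<and> (a \<in> F \<longrightarrow> eqv c F (f a b) a)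
      \<and> (a \<notin> F \<and> b \<in> F \<longrightarrow> eqv c F (f a b) b))"
| "condF c F PUpd f = (\<forall>a b. (f a b \<in> F \<longleftrightarrow> a \<in> F) \<and> (a \<in> F \<and> b \<in> F \<longrightarrow> eqv c F (f a b) b)
      \<and> (a \<in> F \<and> b \<notin> F \<longrightarrow> eqv c F (f a b) a))"

lemma condF_hom:
  assumes r: "rnb c" and F: "filt c F" and cd: "condF c F s f"
  shows "phi c F (f a b) = pt_op s (phi c F a) (phi c F b)"
proof -
  have pe: "phi c F x = phi c F y" if "eqv c F x y" for x y
    using that phi_eq_iff[OF r F] unfolding eqv_def by blast
  have pne: "phi c F x \<noteq> phi c F y" if "x \<in> F" "y \<in> F" "\<not> eqv c F x y" for x y
    using that phi_eq_iff[OF r F] by blast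
  have po: "x \<notin> F \<Longrightarrow> phi c F x = None" for x by (rule phi_out)
  have pi: "x \<in> F \<Longrightarrow> phi c F x \<noteq> None" for x by (rule phi_in_None)
  show ?thesis
  proof (cases s)
    case PRes
    then have h: "(f a b \<in> F \<longleftrightarrow> a \<in> F \<and> b \<in> F) \<and> (f a b \<in> F \<longrightarrow> eqv c F (f a b) b)"
      using cd by simp
    show ?thesis
    proof (cases "f a b \<in> F")
      case True then show ?thesis using h PRes pe[of "f a b" b] pi[of a] by auto
    next
      case False then show ?thesis using h PRes po[of "f a b"] po[of a] po[of b] by auto
    qed
  next
    case PMinus
    then have h: "(f a b \<in> F \<longleftrightarrow> a \<in> F \<and> b \<notin> F) \<and> (f a b \<in> F \<longrightarrow> eqv c F (f a b) a)"
      using cd by simp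
    show ?thesis
    proof (cases "f a b \<in> F")
      case True then show ?thesis using h PMinus pe[of "f a b" a] po[of b] by simp
    next
      case False then show ?thesis using h PMinus po[of "f a b"] po[of a] pi[of b] by auto
    qed
  next
    case PInter
    then have h: "(f a b \<in> F \<longleftrightarrow> eqv c F a b) \<and> (f a b \<in> F \<longrightarrow> eqv c F (f a b) a)"
      using cd by simp
    show ?thesis
    proof (cases "f a b \<in> F")
      case True then show ?thesis using h PInter pe[of "f a b" a] pe[of a b] by simp
    next
      case False
      then have ne: "\<not> eqv c F a b" using h by simp
      show ?thesis
      proof (cases "a \<in> F \<and> b \<in> F")
        case True then show ?thesis using PInter False ne pne[of a b] po[of "f a b"] by simp
      next
        case False2: False
        then show ?thesis using PInter False po[of "f a b"] po[of a] po[of b] pi[of a] pi[of b]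
          by (cases "a \<in> F") auto
      qed
    qed
  next
    case POvr
    then have h: "(f a b \<in> F \<longleftrightarrow> a \<in> F \<or> b \<in> F) \<and> (a \<in> F \<longrightarrow> eqv c F (f a b) a)
      \<and> (a \<notin> F \<and> b \<in> F \<longrightarrow> eqv c F (f a b) b)"
      using cd by simp
    show ?thesis
    proof (cases "a \<in> F")
      case True
      then obtain v where "phi c F a = Some v" using pi[of a] by blast
      then show ?thesis using h POvr True pe[of "f a b" a] by simp
    next
      case False
      then show ?thesis
        using h POvr pe[of "f a b" b] po[of a] po[of b] po[of "f a b"] by (cases "b \<in> F") auto
    qed
  next
    case PUpd
    then have h: "(f a b \<in> F \<longleftrightarrow> a \<in> F) \<and> (a \<in> F \<and> b \<in> F \<longrightarrow> eqv c F (f a b) b)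
      \<and> (a \<in> F \<and> b \<notin> F \<longrightarrow> eqv c F (f a b) a)"
      using cd by simp
    show ?thesis
    proof (cases "a \<in> F")
      case False
      then show ?thesis using h PUpd po[of a] po[of "f a b"] by simp
    next
      case True
      show ?thesis
      proof (cases "b \<in> F")
        case True2: True
        then obtain v where "phi c F b = Some v" using pi[of b] by blast
        then show ?thesis using h PUpd True True2 pe[of "f a b" b] pi[of a] by simp
      next
        case False
        then show ?thesis using h PUpd True pe[of "f a b" a] pi[of a] po[of b] by simp
      qed
    qed
  qed
qed

lemma condF_res: assumes r: "rnb c" and F: "filt c F" shows "condF c F PRes c"
proof -
  have "eqv c F (c a b) b" if "c a b \<in> F" for a b
  proof (rule eqv_le[OF r that that])
    show "b \<in> F" using that F unfolding filt_def by blast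
    show "c (c a b) (c a b) = c a b" by (rule rnb_idem[OF r])
    show "c (c a b) b = c a b" using rnb_assoc[OF r, of a b b] rnb_idem[OF r, of b] by simp
  qed
  then show ?thesis using F unfolding filt_def by simp
qed

section \<open>Separation\<close>

lemma sepA:
  assumes r: "rnb c" and st: "c t s \<noteq> s"
  shows "\<exists>F. filt c F \<and> primeF c F \<and> Zfree c F \<and> s \<in> F \<and> t \<notin> F"
proof -
  let ?I = "{y. lec c y t}"
  have "idl c ?I"
    unfolding idl_def
  proof (intro conjI allI impI)
    fix x y assume "y \<in> ?I \<and> lec c x y" then show "x \<in> ?I" using lec_trans[OF r] by blast
  next
    fix a p q assume h: "Cov c a p q \<and> p \<in> ?I \<and> q \<in> ?I"
    then have pt: "c t p = p" and qt: "c t q = q" unfolding lec_def by auto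
    have e1: "c p a = c p (c t a)" using pt rnb_assoc[OF r, of p t a] rnb_rn[OF r, of p t a] by simp
    have e2: "c q a = c q (c t a)" using qt rnb_assoc[OF r, of q t a] rnb_rn[OF r, of q t a] by simp
    have "c a a = c a (c t a)" using h e1 e2 unfolding Cov_def by blast
    then have "a = c (c a t) a" using rnb_idem[OF r, of a] rnb_assoc[OF r, of a t a] by simp
    also have "\<dots> = c t a" using rnb_rn[OF r, of a t a] rnb_assoc[OF r, of t a a] rnb_idem[OF r, of a] by simp
    finally show "a \<in> ?I" unfolding lec_def by simp
  qed
  moreover have "s \<notin> ?I" using st unfolding lec_def by simp
  ultimately obtain F where F: "filt c F" "primeF c F" "s \<in> F" "F \<inter> ?I = {}"
    using prime_exists[OF r] by blast
  have "t \<notin> F" using F(4) lec_refl[OF r] by blast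
  moreover have "Zfree c F" unfolding Zfree_def
  proof (intro allI impI)
    fix z assume "\<forall>y. c z y = z \<and> c y z = z"
    then have "c t z = z" by blast
    then show "z \<notin> F" using F(4) unfolding lec_def by blast
  qed
  ultimately show ?thesis using F by blast
qed

lemma separate:
  assumes r: "rnb c" and st: "s \<noteq> t"
  shows "\<exists>F. filt c F \<and> primeF c F \<and> Zfree c F \<and> phi c F s \<noteq> phi c F t"
proof (cases "c t s = s \<and> c s t = t")
  case False
  then have "c t s \<noteq> s \<or> c s t \<noteq> t" by blast
  then show ?thesis
  proof
    assume "c t s \<noteq> s"
    from sepA[OF r this] show ?thesis using phi_out phi_in_None by metis
  next
    assume "c s t \<noteq> t"
    from sepA[OF r this] show ?thesis using phi_out phi_in_None by metis
  qed
next
  case True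
  let ?I = "{u. c u s = c u t}"
  have "idl c ?I"
    unfolding idl_def
  proof (intro conjI allI impI)
    fix x y assume "y \<in> ?I \<and> lec c x y"
    then have "c y s = c y t" "c y x = x" unfolding lec_def by auto
    then have "c (c y x) s = c (c y x) t"
      using rnb_assoc[OF r, of x y s] rnb_rn[OF r, of x y s] rnb_assoc[OF r, of x y t] rnb_rn[OF r, of x y t]
        rnb_assoc[OF r, of y x s] rnb_assoc[OF r, of y x t] by simp
    then show "x \<in> ?I" using \<open>c y x = x\<close> by simp
  next
    fix a p q assume "Cov c a p q \<and> p \<in> ?I \<and> q \<in> ?I"
    then show "a \<in> ?I" unfolding Cov_def by blast
  qed
  moreover have "s \<notin> ?I" using True st rnb_idem[OF r, of s] by simp
  ultimately obtain F where F: "filt c F" "primeF c F" "s \<in> F" "F \<inter> ?I = {}"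
    using prime_exists[OF r] by blast
  have tF: "t \<in> F" using filt_up[OF F(1) F(3)] True unfolding lec_def by blast
  have "\<not> eqv c F s t" using F(4) unfolding eqv_def by blast
  then have "phi c F s \<noteq> phi c F t" using phi_eq_iff[OF r F(1) F(3) tF] by simp
  moreover have "Zfree c F" unfolding Zfree_def using F(4) by auto
  ultimately show ?thesis using F by blast
qed

lemma points:
  fixes c :: "'a \<Rightarrow> 'a \<Rightarrow> 'a"
  assumes r: "rnb c"
    and cd: "\<And>F. filt c F \<Longrightarrow> primeF c F \<Longrightarrow> Zfree c F \<Longrightarrow> \<forall>(s, f) \<in> set ops. condF c F s f"
  shows "representable_in TYPE('a \<times> 'a) TYPE('a) ops"
proof (rule rep_I)
  fix s t :: 'a assume "s \<noteq> t"
  then obtain F where F: "filt c F" "primeF c F" "Zfree c F" "phi c F s \<noteq> phi c F t"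
    using separate[OF r] by blast
  have "homs ops (phi c F)"
    unfolding homs_def using cd[OF F(1-3)] condF_hom[OF r F(1)] by fast
  then show "\<exists>\<phi>. homs ops \<phi> \<and> \<phi> s \<noteq> \<phi> t" using F(4) by blast
qed



lemma inj_pt: "inj h \<Longrightarrow> (\<And>x. h a x = h b x) \<Longrightarrow> a = b"
  by (metis ext injD)

lemma snd_rnb:
  assumes inj: "inj h" and hc: "\<And>a b x. h (c a b) x = pt_op PRes (h a x) (h b x)"
  shows "rnb c"
  unfolding rnb_def
  by (intro conjI allI; rule inj_pt[OF inj]; auto simp: hc)

lemma snd_rnb_int:
  assumes inj: "inj h" and hc: "\<And>a b x. h (c a b) x = pt_op PRes (h a x) (h b x)"
    and hi: "\<And>a b x. h (i a b) x = pt_op PInter (h a x) (h b x)"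
  shows "rnb_int c i"
  unfolding rnb_int_def semilattice_op_def
  apply (intro conjI allI)
  apply (rule snd_rnb[OF inj hc])
  apply (rule inj_pt[OF inj]; auto simp: hc hi)
  apply (rule inj_pt[OF inj]; auto simp: hc hi)
  apply (rule inj_pt[OF inj]; auto simp: hc hi)
  apply (rule inj_pt[OF inj]; auto simp: hc hi)
  apply (rule inj_pt[OF inj]; auto simp: hc hi)
  done
lemma hc_of_hm:
  assumes hm: "\<And>a b x. h (m a b) x = pt_op PMinus (h a x) (h b x)"
  shows "h (comp_of_minus m a b) x = pt_op PRes (h a x) (h b x)"
  unfolding comp_of_minus_def using hm by simp

lemma snd_minus:
  assumes inj: "inj h" and hm: "\<And>a b x. h (m a b) x = pt_op PMinus (h a x) (h b x)"
  shows "minus_alg (comp_of_minus m) m"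
proof -
  note hc = hc_of_hm[of h m, OF hm]
  have r: "rnb (comp_of_minus m)" by (rule snd_rnb[of h "comp_of_minus m", OF inj hc])
  have z: "\<forall>x. m x x = m undefined undefined" by (intro allI, rule inj_pt[OF inj]) (simp add: hm)
  have f1: "\<forall>x. comp_of_minus m x (m undefined undefined) = m undefined undefined \<and>
            comp_of_minus m (m undefined undefined) x = m undefined undefined"
    by (intro allI conjI; rule inj_pt[OF inj]; auto simp: hm hc)
  have f2: "\<forall>x y. comp_of_minus m (m x y) y = m undefined undefined"
    by (intro allI; rule inj_pt[OF inj]; auto simp: hm hc)
  have f3: "\<forall>x y. comp_of_minus m (m x y) x = m x y"
    by (intro allI; rule inj_pt[OF inj]; auto simp: hm hc)
  have f4: "\<forall>x y z. comp_of_minus m (m x y) z = m (comp_of_minus m x z) y"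
    by (intro allI; rule inj_pt[OF inj]; auto simp: hm hc)
  have f5: "\<forall>s t x. m s x = m t x \<and> comp_of_minus m x s = comp_of_minus m x t \<longrightarrow> s = t"
  proof (intro allI impI)
    fix s t x assume e: "m s x = m t x \<and> comp_of_minus m x s = comp_of_minus m x t"
    show "s = t"
    proof (rule inj_pt[OF inj])
      fix p
      have e1: "h (m s x) p = h (m t x) p" using e by simp
      have e2: "h (comp_of_minus m x s) p = h (comp_of_minus m x t) p"
        using e by simp
      show "h s p = h t p" using e1 e2 unfolding hm hc by (cases "h x p"; cases "h s p"; cases "h t p") auto
    qed
  qed
  have f0: "\<forall>x y. comp_of_minus m x y = m y (m y x)" by (simp add: comp_of_minus_def)
  show ?thesis unfolding minus_alg_def
    apply (rule conjI, rule f0)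
    apply (rule conjI, rule r)
    apply (rule conjI)
     apply (rule exI[of _ "m undefined undefined"])
     apply (intro conjI)
       apply (rule z)
      apply (rule f1)
     apply (rule f2)
    apply (intro conjI)
      apply (rule f3)
     apply (rule f4)
    apply (rule f5)
    done
qed




lemma snd_minus_ovr:
  assumes inj: "inj h" and hm: "\<And>a b x. h (m a b) x = pt_op PMinus (h a x) (h b x)"
    and ho: "\<And>a b x. h (ov a b) x = pt_op POvr (h a x) (h b x)"
  shows "minus_alg_ovr (comp_of_minus m) m ov"
proof -
  note hc = hc_of_hm[of h m, OF hm]
  show ?thesis unfolding minus_alg_ovr_def
    apply (intro conjI allI)
    apply (rule snd_minus[of h m, OF inj hm])
    apply (rule inj_pt[OF inj]; auto simp: hm hc ho split: option.splits)
    apply (rule inj_pt[OF inj]; auto simp: hm hc ho split: option.splits)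
    done
qed

lemma snd_minus_upd:
  assumes inj: "inj h" and hm: "\<And>a b x. h (m a b) x = pt_op PMinus (h a x) (h b x)"
    and hu: "\<And>a b x. h (up a b) x = pt_op PUpd (h a x) (h b x)"
  shows "minus_alg_upd (comp_of_minus m) m up"
proof -
  note hc = hc_of_hm[of h m, OF hm]
  show ?thesis unfolding minus_alg_upd_def
    apply (intro conjI allI)
    apply (rule snd_minus[of h m, OF inj hm])
    apply (rule inj_pt[OF inj]; auto simp: hm hc hu split: option.splits)+
    done
qed

lemma snd_rnb_int_ovr:
  assumes inj: "inj h" and hc: "\<And>a b x. h (c a b) x = pt_op PRes (h a x) (h b x)"
    and hi: "\<And>a b x. h (i a b) x = pt_op PInter (h a x) (h b x)"
    and ho: "\<And>a b x. h (ov a b) x = pt_op POvr (h a x) (h b x)"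
  shows "rnb_int_ovr c i ov"
  unfolding rnb_int_ovr_def
  apply (intro conjI allI)
  apply (rule snd_rnb_int[of h c i, OF inj hc hi])
  apply (rule inj_pt[OF inj]; auto simp: hc hi ho split: option.splits)+
  done

lemma snd_rnb_int_upd:
  assumes inj: "inj h" and hc: "\<And>a b x. h (c a b) x = pt_op PRes (h a x) (h b x)"
    and hi: "\<And>a b x. h (i a b) x = pt_op PInter (h a x) (h b x)"
    and hu: "\<And>a b x. h (up a b) x = pt_op PUpd (h a x) (h b x)"
  shows "rnb_int_upd c i up"
proof -
  have qi: "c x a = c x b" if e: "c (i x (up x y)) a = c (i x (up x y)) b \<and> c y a = c y b" for x y a b
  proof (rule inj_pt[OF inj])
    fix p
    have e1: "h (c (i x (up x y)) a) p = h (c (i x (up x y)) b) p" using e by simp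
    have e2: "h (c y a) p = h (c y b) p" using e by simp
    show "h (c x a) p = h (c x b) p" using e1 e2 unfolding hc hi hu
      by (auto split: if_splits option.splits)
  qed
  show ?thesis unfolding rnb_int_upd_def
    apply (intro conjI allI)
    apply (rule snd_rnb_int[of h c i, OF inj hc hi])
    apply (rule inj_pt[OF inj]; auto simp: hc hi hu split: option.splits)
    apply (rule inj_pt[OF inj]; auto simp: hc hi hu split: option.splits)
    apply (rule inj_pt[OF inj]; auto simp: hc hi hu split: option.splits)
    using qi apply blast
    done
qed




section \<open>Completeness: conditions on prime filters\<close>

lemma MA:
  assumes "minus_alg c m"
  shows MA_rnb: "rnb c"
    and MA_zero: "m x x = m y y"
    and MA_cz: "c x (m y y) = m y y"
    and MA_zc: "c (m y y) x = m y y"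
    and MA_mb: "c (m x y) y = m w w"
    and MA_ma: "c (m x y) x = m x y"
    and MA_mc: "c (m x y) w = m (c x w) y"
    and MA_qi: "m s x = m t x \<Longrightarrow> c x s = c x t \<Longrightarrow> s = t"
proof -
  from assms obtain z where r: "rnb c" and z1: "\<forall>x. m x x = z" and z2: "\<forall>x. c x z = z \<and> c z x = z"
    and z3: "\<forall>x y. c (m x y) y = z" and a1: "\<forall>x y. c (m x y) x = m x y"
    and a2: "\<forall>x y z. c (m x y) z = m (c x z) y"
    and a3: "\<forall>s t x. m s x = m t x \<and> c x s = c x t \<longrightarrow> s = t"
    unfolding minus_alg_def by blast
  show "rnb c" by (rule r)
  show "m x x = m y y" using z1 by simp
  show "c x (m y y) = m y y" using z1 z2 by simp
  show "c (m y y) x = m y y" using z1 z2 by simp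
  show "c (m x y) y = m w w" using z1 z3 by simp
  show "c (m x y) x = m x y" using a1 by simp
  show "c (m x y) w = m (c x w) y" using a2 by simp
  show "m s x = m t x \<Longrightarrow> c x s = c x t \<Longrightarrow> s = t" using a3 by blast
qed

lemma sw_rnb: assumes r: "rnb c" shows "c u (c x v) = c x (c u v)"
  using rnb_assoc[OF r, of u x v] rnb_rn[OF r, of u x v] rnb_assoc[OF r, of x u v] by simp

lemma minus_cond:
  assumes ma: "minus_alg c m" and F: "filt c F" and P: "primeF c F" and Z: "Zfree c F"
  shows "condF c F PMinus m"
proof -
  note r = MA_rnb[OF ma]
  have cov: "Cov c a b (m a b)" for a b
    unfolding Cov_def
  proof (intro allI impI)
    fix z z' assume e: "c b z = c b z' \<and> c (m a b) z = c (m a b) z'"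
    show "c a z = c a z'"
    proof (rule MA_qi[OF ma, of _ b])
      show "m (c a z) b = m (c a z') b" using e MA_mc[OF ma, of a b] by metis
      show "c b (c a z) = c b (c a z')" using e sw_rnb[OF r, of b a] by metis
    qed
  qed
  have zF: "m w w \<notin> F" for w
    using Z MA_zc[OF ma] MA_cz[OF ma] unfolding Zfree_def by blast
  have "(m a b \<in> F \<longleftrightarrow> a \<in> F \<and> b \<notin> F) \<and> (m a b \<in> F \<longrightarrow> eqv c F (m a b) a)" for a b
  proof -
    have le: "lec c (m a b) a" by (rule lec_of_nat[OF r MA_ma[OF ma]])
    have i1: "a \<in> F" if "m a b \<in> F" using filt_up[OF F that le] .
    have i2: "b \<notin> F" if "m a b \<in> F"
    proof
      assume "b \<in> F"
      then have "c (m a b) b \<in> F" using that F by (simp add: filt_c)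
      then show False using MA_mb[OF ma, of a b a] zF by simp
    qed
    have i3: "m a b \<in> F" if "a \<in> F" "b \<notin> F" using P cov[of a b] that unfolding primeF_def by blast
    have "eqv c F (m a b) a" if "m a b \<in> F"
      using eqv_le[OF r that that i1[OF that] rnb_idem[OF r] MA_ma[OF ma]] .
    then show ?thesis using i1 i2 i3 by blast
  qed
  then show ?thesis by simp
qed

lemma inter_cond:
  assumes ri: "rnb_int c i" and F: "filt c F"
  shows "condF c F PInter i"
proof -
  from ri have r: "rnb c" and ia: "\<And>x y z. i (i x y) z = i x (i y z)" and ic: "\<And>x y. i x y = i y x"
    and ii: "\<And>x. i x x = x" and a1: "\<And>x y. c (i x y) x = i x y"
    and a2: "\<And>x y z. c x (i y z) = i (c x y) z"
    unfolding rnb_int_def semilattice_op_def by blast+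
  have "(i a b \<in> F \<longleftrightarrow> eqv c F a b) \<and> (i a b \<in> F \<longrightarrow> eqv c F (i a b) a)" for a b
  proof -
    have la: "lec c (i a b) a" unfolding lec_def using a2[of a a b] rnb_idem[OF r, of a] by simp
    have lb: "lec c (i a b) b" unfolding lec_def using a2[of b b a] rnb_idem[OF r, of b] ic[of a b] by simp
    have ca: "c (i a b) a = i a b" by (rule a1)
    have cb: "c (i a b) b = i a b" using a1[of b a] ic[of a b] by simp
    have 1: "eqv c F a b" if "i a b \<in> F"
      using eqv_le[OF r that filt_up[OF F that la] filt_up[OF F that lb] ca cb] .
    have 2: "i a b \<in> F" if e: "eqv c F a b"
    proof -
      obtain u where u: "u \<in> F" "c u a = c u b" "b \<in> F" using e unfolding eqv_def by blast
      have "c u (i a b) = c u b" using a2[of u a b] a2[of u b b] u(2) ii[of b] by simp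
      also have "\<dots> \<in> F" using F u by (simp add: filt_c)
      finally show ?thesis using F unfolding filt_def by blast
    qed
    have 3: "eqv c F (i a b) a" if "i a b \<in> F"
      using eqv_le[OF r that that filt_up[OF F that la] rnb_idem[OF r] ca] .
    show ?thesis using 1 2 3 by blast
  qed
  then show ?thesis by simp
qed

lemma ovr_minus_cond:
  assumes mo: "minus_alg_ovr c m ov" and F: "filt c F" and P: "primeF c F" and Z: "Zfree c F"
  shows "condF c F POvr ov"
proof -
  have ma: "minus_alg c m" and o1: "\<And>x y. m (ov x y) x = m y x" and o2: "\<And>x y. c x (ov x y) = x"
    using mo unfolding minus_alg_ovr_def by blast+
  note r = MA_rnb[OF ma]
  have mc: "condF c F PMinus m" by (rule minus_cond[OF ma F P Z])
  have "(ov a b \<in> F \<longleftrightarrow> a \<in> F \<or> b \<in> F) \<and> (a \<in> F \<longrightarrow> eqv c F (ov a b) a)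
      \<and> (a \<notin> F \<and> b \<in> F \<longrightarrow> eqv c F (ov a b) b)" for a b
  proof -
    have cov: "Cov c (ov a b) a b"
      unfolding Cov_def
    proof (intro allI impI)
      fix z z' assume e: "c a z = c a z' \<and> c b z = c b z'"
      show "c (ov a b) z = c (ov a b) z'"
      proof (rule MA_qi[OF ma, of _ a])
        have "m (c (ov a b) z) a = m (c b z) a" using MA_mc[OF ma, of "ov a b" a z] MA_mc[OF ma, of b a z] o1[of a b] by simp
        moreover have "m (c (ov a b) z') a = m (c b z') a" using MA_mc[OF ma, of "ov a b" a z'] MA_mc[OF ma, of b a z'] o1[of a b] by simp
        ultimately show "m (c (ov a b) z) a = m (c (ov a b) z') a" using e by simp
        have "c a (c (ov a b) z) = c a z" using rnb_assoc[OF r, of a "ov a b" z] o2[of a b] by simp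
        moreover have "c a (c (ov a b) z') = c a z'" using rnb_assoc[OF r, of a "ov a b" z'] o2[of a b] by simp
        ultimately show "c a (c (ov a b) z) = c a (c (ov a b) z')" using e by simp
      qed
    qed
    have la: "lec c a (ov a b)" by (rule lec_of_nat[OF r o2])
    have lb: "lec c b (ov a b)" unfolding lec_def
    proof (rule MA_qi[OF ma, of _ a])
      show "m (c (ov a b) b) a = m b a"
        using MA_mc[OF ma, of "ov a b" a b] o1[of a b] MA_mc[OF ma, of b a b] rnb_idem[OF r, of b] by simp
      show "c a (c (ov a b) b) = c a b" using rnb_assoc[OF r, of a "ov a b" b] o2[of a b] by simp
    qed
    have 1: "ov a b \<in> F \<longleftrightarrow> a \<in> F \<or> b \<in> F"
      using P cov filt_up[OF F _ la] filt_up[OF F _ lb] unfolding primeF_def by blast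
    have 2: "eqv c F (ov a b) a" if "a \<in> F"
      using eqv_le[OF r that filt_up[OF F that la] that o2 rnb_idem[OF r]] .
    have 3: "eqv c F (ov a b) b" if "a \<notin> F" "b \<in> F"
    proof -
      have u: "m b a \<in> F" using mc that by simp
      have "c (m b a) (ov a b) = m b a" using MA_ma[OF ma, of "ov a b" a] o1[of a b] by simp
      moreover have "c (m b a) b = m b a" by (rule MA_ma[OF ma])
      ultimately show ?thesis using eqv_le[OF r u] 1 that by blast
    qed
    show ?thesis using 1 2 3 by blast
  qed
  then show ?thesis by simp
qed

lemma upd_eqv_b:
  assumes r: "rnb c" and F: "filt c F" and a: "a \<in> F" and b: "b \<in> F"
    and u1: "c a (up a b) = up a b" and u2: "c a b = c b (up a b)" and uF: "up a b \<in> F"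
  shows "eqv c F (up a b) b"
proof (rule eqv_le[OF r _ uF b])
  show "c a b \<in> F" using F a b by (simp add: filt_c)
  have "c (c a b) (up a b) = c (c b a) (up a b)" by (rule rnb_rn[OF r])
  also have "\<dots> = c b (c a (up a b))" by (rule rnb_assoc[OF r])
  finally show "c (c a b) (up a b) = c a b" using u1 u2 by simp
  show "c (c a b) b = c a b" using rnb_assoc[OF r, of a b b] rnb_idem[OF r, of b] by simp
qed

lemma upd_minus_cond:
  assumes mu: "minus_alg_upd c m up" and F: "filt c F" and P: "primeF c F" and Z: "Zfree c F"
  shows "condF c F PUpd up"
proof -
  have ma: "minus_alg c m" and u1: "\<And>x y. m (up x y) x = m x x" and u2: "\<And>x y. m x (up x y) = m x x"
    and u3: "\<And>x y. c (m (up x y) y) x = m (up x y) y" and u4: "\<And>x y. c x y = c y (up x y)"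
    using mu unfolding minus_alg_upd_def by blast+
  note r = MA_rnb[OF ma]
  have mc: "condF c F PMinus m" by (rule minus_cond[OF ma F P Z])
  have "(up a b \<in> F \<longleftrightarrow> a \<in> F) \<and> (a \<in> F \<and> b \<in> F \<longrightarrow> eqv c F (up a b) b)
      \<and> (a \<in> F \<and> b \<notin> F \<longrightarrow> eqv c F (up a b) a)" for a b
  proof -
    have U1: "c (up a b) a = a"
    proof (rule MA_qi[OF ma, of _ "up a b"])
      show "m (c (up a b) a) (up a b) = m a (up a b)"
        using MA_mc[OF ma, of "up a b" "up a b" a] MA_zc[OF ma, of "up a b" a] u2[of a b] MA_zero[OF ma, of a "up a b"] by simp
      show "c (up a b) (c (up a b) a) = c (up a b) a"
        using rnb_assoc[OF r, of "up a b" "up a b" a] rnb_idem[OF r, of "up a b"] by simp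
    qed
    have U2: "c a (up a b) = up a b"
    proof (rule MA_qi[OF ma, of _ a])
      show "m (c a (up a b)) a = m (up a b) a"
        using MA_mc[OF ma, of a a "up a b"] MA_zc[OF ma, of a "up a b"] u1[of a b] by simp
      show "c a (c a (up a b)) = c a (up a b)"
        using rnb_assoc[OF r, of a a "up a b"] rnb_idem[OF r, of a] by simp
    qed
    have 1: "up a b \<in> F \<longleftrightarrow> a \<in> F"
      using filt_up[of c F, OF F _ U1[folded lec_def]] filt_up[of c F, OF F _ U2[folded lec_def]] by blast
    have 2: "eqv c F (up a b) b" if "a \<in> F" "b \<in> F"
      using upd_eqv_b[of c F a b up, OF r F that U2 u4[of a b]] 1 that by blast
    have 3: "eqv c F (up a b) a" if "a \<in> F" "b \<notin> F"
    proof -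
      have u: "m (up a b) b \<in> F" using mc that 1 by simp
      show ?thesis using eqv_le[OF r u _ that(1) MA_ma[OF ma] u3] 1 that by blast
    qed
    show ?thesis using 1 2 3 by blast
  qed
  then show ?thesis by simp
qed

lemma ovr_int_cond:
  assumes ro: "rnb_int_ovr c i ov" and F: "filt c F" and P: "primeF c F"
  shows "condF c F POvr ov"
proof -
  have ri: "rnb_int c i" and o1: "\<And>s t. c s (ov s t) = s"
    and o2: "\<And>s t. ov (i (ov s t) t) s = ov s t" and o3: "\<And>s t u. c (ov s t) u = ov (c s u) (c t u)"
    using ro unfolding rnb_int_ovr_def by blast+
  have r: "rnb c" using ri unfolding rnb_int_def by blast
  have ic: "condF c F PInter i" by (rule inter_cond[OF ri F])
  have "(ov a b \<in> F \<longleftrightarrow> a \<in> F \<or> b \<in> F) \<and> (a \<in> F \<longrightarrow> eqv c F (ov a b) a)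
      \<and> (a \<notin> F \<and> b \<in> F \<longrightarrow> eqv c F (ov a b) b)" for a b
  proof -
    have cov: "Cov c (ov a b) a b" unfolding Cov_def using o3 by simp
    have la: "lec c a (ov a b)" by (rule lec_of_nat[OF r o1])
    have lb: "lec c b (ov a b)" unfolding lec_def using ro unfolding rnb_int_ovr_def rnb_int_def rnb_def semilattice_op_def
      by metis
    have 1: "ov a b \<in> F \<longleftrightarrow> a \<in> F \<or> b \<in> F"
      using P cov filt_up[OF F _ la] filt_up[OF F _ lb] unfolding primeF_def by blast
    have 2: "eqv c F (ov a b) a" if "a \<in> F"
      using eqv_le[OF r that filt_up[OF F that la] that o1 rnb_idem[OF r]] .
    have 3: "eqv c F (ov a b) b" if "a \<notin> F" "b \<in> F"
    proof -
      have cov2: "Cov c (ov a b) (i (ov a b) b) a"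
        unfolding Cov_def using o3[of "i (ov a b) b" a] o2[of a b] by metis
      have "ov a b \<in> F" using 1 that by blast
      then have "i (ov a b) b \<in> F" using P cov2 that unfolding primeF_def by blast
      then show ?thesis using ic by simp
    qed
    show ?thesis using 1 2 3 by blast
  qed
  then show ?thesis by simp
qed

lemma upd_int_cond:
  assumes ru: "rnb_int_upd c i up" and F: "filt c F" and P: "primeF c F"
  shows "condF c F PUpd up"
proof -
  have ri: "rnb_int c i" and u1: "\<And>s t. s = c (up s t) s"
    and u3: "\<And>s t. c s t = c t (up s t)"
    and qi: "\<And>x y a b. c (i x (up x y)) a = c (i x (up x y)) b \<and> c y a = c y b \<Longrightarrow> c x a = c x b"
    using ru unfolding rnb_int_upd_def by blast+
  have r: "rnb c" using ri unfolding rnb_int_def by blast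
  have ic: "condF c F PInter i" by (rule inter_cond[OF ri F])
  have "(up a b \<in> F \<longleftrightarrow> a \<in> F) \<and> (a \<in> F \<and> b \<in> F \<longrightarrow> eqv c F (up a b) b)
      \<and> (a \<in> F \<and> b \<notin> F \<longrightarrow> eqv c F (up a b) a)" for a b
  proof -
    have U1: "c (up a b) a = a" using u1[of a b] by simp
    have U2: "c a (up a b) = up a b" using ru unfolding rnb_int_upd_def rnb_int_def rnb_def semilattice_op_def
      by metis
    have 1: "up a b \<in> F \<longleftrightarrow> a \<in> F"
      using filt_up[of c F, OF F _ U1[folded lec_def]] filt_up[of c F, OF F _ U2[folded lec_def]] by blast
    have 2: "eqv c F (up a b) b" if "a \<in> F" "b \<in> F"
      using upd_eqv_b[of c F a b up, OF r F that U2 u3[of a b]] 1 that by blast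
    have 3: "eqv c F (up a b) a" if "a \<in> F" "b \<notin> F"
    proof -
      have cov: "Cov c a (i a (up a b)) b" unfolding Cov_def using qi by blast
      then have "i a (up a b) \<in> F" using P that unfolding primeF_def by blast
      then have "eqv c F a (up a b)" using ic by simp
      then show ?thesis by (rule eqv_sym)
    qed
    show ?thesis using 1 2 3 by blast
  qed
  then show ?thesis by simp
qed




lemma hom_of:
  assumes "\<And>s f a b x. (s, f) \<in> set ops \<Longrightarrow> h (f a b) x = pt_op s (h a x) (h b x)" and "(s, f) \<in> set ops"
  shows "h (f a b) x = pt_op s (h a x) (h b x)"
  using assms by blast

lemma part1:
  fixes TX :: "'x itself" and TY :: "'y itself"
  shows "\<forall>(c::'a \<Rightarrow> 'a \<Rightarrow> 'a) i.
      (representable_in TX TY [(PRes, c), (PInter, i)] \<longrightarrow> rnb_int c i) \<and>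
      (rnb_int c i \<longrightarrow> representable_in TYPE('a \<times> 'a) TYPE('a) [(PRes, c), (PInter, i)])"
proof (intro allI conjI impI)
  fix c i :: "'a \<Rightarrow> 'a \<Rightarrow> 'a"
  assume "representable_in TX TY [(PRes, c), (PInter, i)]"
  then obtain h :: "'a \<Rightarrow> ('x \<rightharpoonup> 'y)" where inj: "inj h"
    and H: "\<And>s f a b x. (s, f) \<in> set [(PRes, c), (PInter, i)] \<Longrightarrow> h (f a b) x = pt_op s (h a x) (h b x)"
    by (rule rep_D) blast
  show "rnb_int c i"
    by (rule snd_rnb_int[of h c i, OF inj]) (rule H, simp)+
next
  fix c i :: "'a \<Rightarrow> 'a \<Rightarrow> 'a"
  assume ri: "rnb_int c i"
  then have r: "rnb c" unfolding rnb_int_def by blast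
  show "representable_in TYPE('a \<times> 'a) TYPE('a) [(PRes, c), (PInter, i)]"
    by (rule points[OF r]) (simp del: condF.simps add: condF_res[OF r] inter_cond[OF ri])
qed

lemma part2:
  fixes TX :: "'x itself" and TY :: "'y itself"
  shows "\<forall>(m::'a \<Rightarrow> 'a \<Rightarrow> 'a).
      (representable_in TX TY [(PMinus, m)] \<longrightarrow> minus_alg (comp_of_minus m) m) \<and>
      (minus_alg (comp_of_minus m) m \<longrightarrow> representable_in TYPE('a \<times> 'a) TYPE('a) [(PMinus, m)])"
proof (intro allI conjI impI)
  fix m :: "'a \<Rightarrow> 'a \<Rightarrow> 'a"
  assume "representable_in TX TY [(PMinus, m)]"
  then obtain h :: "'a \<Rightarrow> ('x \<rightharpoonup> 'y)" where inj: "inj h"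
    and H: "\<And>s f a b x. (s, f) \<in> set [(PMinus, m)] \<Longrightarrow> h (f a b) x = pt_op s (h a x) (h b x)"
    by (rule rep_D) blast
  show "minus_alg (comp_of_minus m) m"
    by (rule snd_minus[of h m, OF inj]) (rule H, simp)+
next
  fix m :: "'a \<Rightarrow> 'a \<Rightarrow> 'a"
  assume ma: "minus_alg (comp_of_minus m) m"
  show "representable_in TYPE('a \<times> 'a) TYPE('a) [(PMinus, m)]"
    by (rule points[OF MA_rnb[OF ma]]) (simp del: condF.simps add: minus_cond[OF ma])
qed

lemma part3:
  fixes TX :: "'x itself" and TY :: "'y itself"
  shows "\<forall>(m::'a \<Rightarrow> 'a \<Rightarrow> 'a) ov.
      (representable_in TX TY [(PMinus, m), (POvr, ov)] \<longrightarrow> minus_alg_ovr (comp_of_minus m) m ov) \<and>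
      (minus_alg_ovr (comp_of_minus m) m ov \<longrightarrow>
         representable_in TYPE('a \<times> 'a) TYPE('a) [(PMinus, m), (POvr, ov)])"
proof (intro allI conjI impI)
  fix m ov :: "'a \<Rightarrow> 'a \<Rightarrow> 'a"
  assume "representable_in TX TY [(PMinus, m), (POvr, ov)]"
  then obtain h :: "'a \<Rightarrow> ('x \<rightharpoonup> 'y)" where inj: "inj h"
    and H: "\<And>s f a b x. (s, f) \<in> set [(PMinus, m), (POvr, ov)] \<Longrightarrow> h (f a b) x = pt_op s (h a x) (h b x)"
    by (rule rep_D) blast
  show "minus_alg_ovr (comp_of_minus m) m ov"
    by (rule snd_minus_ovr[of h m ov, OF inj]) (rule H, simp)+
next
  fix m ov :: "'a \<Rightarrow> 'a \<Rightarrow> 'a"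
  assume mo: "minus_alg_ovr (comp_of_minus m) m ov"
  then have ma: "minus_alg (comp_of_minus m) m" unfolding minus_alg_ovr_def by blast
  show "representable_in TYPE('a \<times> 'a) TYPE('a) [(PMinus, m), (POvr, ov)]"
    by (rule points[OF MA_rnb[OF ma]]) (simp del: condF.simps add: minus_cond[OF ma] ovr_minus_cond[OF mo])
qed

lemma part4:
  fixes TX :: "'x itself" and TY :: "'y itself"
  shows "\<forall>(m::'a \<Rightarrow> 'a \<Rightarrow> 'a) up.
      (representable_in TX TY [(PMinus, m), (PUpd, up)] \<longrightarrow> minus_alg_upd (comp_of_minus m) m up) \<and>
      (minus_alg_upd (comp_of_minus m) m up \<longrightarrow>
         representable_in TYPE('a \<times> 'a) TYPE('a) [(PMinus, m), (PUpd, up)])"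
proof (intro allI conjI impI)
  fix m up :: "'a \<Rightarrow> 'a \<Rightarrow> 'a"
  assume "representable_in TX TY [(PMinus, m), (PUpd, up)]"
  then obtain h :: "'a \<Rightarrow> ('x \<rightharpoonup> 'y)" where inj: "inj h"
    and H: "\<And>s f a b x. (s, f) \<in> set [(PMinus, m), (PUpd, up)] \<Longrightarrow> h (f a b) x = pt_op s (h a x) (h b x)"
    by (rule rep_D) blast
  show "minus_alg_upd (comp_of_minus m) m up"
    by (rule snd_minus_upd[of h m up, OF inj]) (rule H, simp)+
next
  fix m up :: "'a \<Rightarrow> 'a \<Rightarrow> 'a"
  assume mu: "minus_alg_upd (comp_of_minus m) m up"
  then have ma: "minus_alg (comp_of_minus m) m" unfolding minus_alg_upd_def by blast
  show "representable_in TYPE('a \<times> 'a) TYPE('a) [(PMinus, m), (PUpd, up)]"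
    by (rule points[OF MA_rnb[OF ma]]) (simp del: condF.simps add: minus_cond[OF ma] upd_minus_cond[OF mu])
qed

lemma part5a:
  fixes TX :: "'x itself" and TY :: "'y itself"
  shows "\<forall>(m::'a \<Rightarrow> 'a \<Rightarrow> 'a) i.
      (representable_in TX TY [(PMinus, m), (PInter, i)] \<longrightarrow>
         minus_alg (comp_of_minus m) m \<and> rnb_int (comp_of_minus m) i) \<and>
      (minus_alg (comp_of_minus m) m \<and> rnb_int (comp_of_minus m) i \<longrightarrow>
         representable_in TYPE('a \<times> 'a) TYPE('a) [(PMinus, m), (PInter, i)])"
proof (intro allI conjI impI)
  fix m i :: "'a \<Rightarrow> 'a \<Rightarrow> 'a"
  assume "representable_in TX TY [(PMinus, m), (PInter, i)]"
  then obtain h :: "'a \<Rightarrow> ('x \<rightharpoonup> 'y)" where inj: "inj h"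
    and H: "\<And>s f a b x. (s, f) \<in> set [(PMinus, m), (PInter, i)] \<Longrightarrow> h (f a b) x = pt_op s (h a x) (h b x)"
    by (rule rep_D) blast
  have hm: "\<And>a b x. h (m a b) x = pt_op PMinus (h a x) (h b x)" by (rule H) simp
  have hi: "\<And>a b x. h (i a b) x = pt_op PInter (h a x) (h b x)" by (rule H) simp
  show "minus_alg (comp_of_minus m) m" by (rule snd_minus[of h m, OF inj hm])
  show "rnb_int (comp_of_minus m) i"
    by (rule snd_rnb_int[of h "comp_of_minus m" i, OF inj hc_of_hm[of h m, OF hm] hi])
next
  fix m i :: "'a \<Rightarrow> 'a \<Rightarrow> 'a"
  assume a: "minus_alg (comp_of_minus m) m \<and> rnb_int (comp_of_minus m) i"
  then have ma: "minus_alg (comp_of_minus m) m" and ri: "rnb_int (comp_of_minus m) i" by blast+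
  show "representable_in TYPE('a \<times> 'a) TYPE('a) [(PMinus, m), (PInter, i)]"
    by (rule points[OF MA_rnb[OF ma]]) (simp del: condF.simps add: minus_cond[OF ma] inter_cond[OF ri])
qed

lemma part5b:
  fixes TX :: "'x itself" and TY :: "'y itself"
  shows "\<forall>(m::'a \<Rightarrow> 'a \<Rightarrow> 'a) ov i.
      (representable_in TX TY [(PMinus, m), (POvr, ov), (PInter, i)] \<longrightarrow>
         minus_alg_ovr (comp_of_minus m) m ov \<and> rnb_int (comp_of_minus m) i) \<and>
      (minus_alg_ovr (comp_of_minus m) m ov \<and> rnb_int (comp_of_minus m) i \<longrightarrow>
         representable_in TYPE('a \<times> 'a) TYPE('a) [(PMinus, m), (POvr, ov), (PInter, i)])"
proof (intro allI conjI impI)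
  fix m ov i :: "'a \<Rightarrow> 'a \<Rightarrow> 'a"
  assume "representable_in TX TY [(PMinus, m), (POvr, ov), (PInter, i)]"
  then obtain h :: "'a \<Rightarrow> ('x \<rightharpoonup> 'y)" where inj: "inj h"
    and H: "\<And>s f a b x. (s, f) \<in> set [(PMinus, m), (POvr, ov), (PInter, i)] \<Longrightarrow> h (f a b) x = pt_op s (h a x) (h b x)"
    by (rule rep_D) blast
  have hm: "\<And>a b x. h (m a b) x = pt_op PMinus (h a x) (h b x)" by (rule H) simp
  have ho: "\<And>a b x. h (ov a b) x = pt_op POvr (h a x) (h b x)" by (rule H) simp
  have hi: "\<And>a b x. h (i a b) x = pt_op PInter (h a x) (h b x)" by (rule H) simp
  show "minus_alg_ovr (comp_of_minus m) m ov" by (rule snd_minus_ovr[of h m ov, OF inj hm ho])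
  show "rnb_int (comp_of_minus m) i"
    by (rule snd_rnb_int[of h "comp_of_minus m" i, OF inj hc_of_hm[of h m, OF hm] hi])
next
  fix m ov i :: "'a \<Rightarrow> 'a \<Rightarrow> 'a"
  assume a: "minus_alg_ovr (comp_of_minus m) m ov \<and> rnb_int (comp_of_minus m) i"
  then have mo: "minus_alg_ovr (comp_of_minus m) m ov" and ri: "rnb_int (comp_of_minus m) i" by blast+
  then have ma: "minus_alg (comp_of_minus m) m" unfolding minus_alg_ovr_def by blast
  show "representable_in TYPE('a \<times> 'a) TYPE('a) [(PMinus, m), (POvr, ov), (PInter, i)]"
    by (rule points[OF MA_rnb[OF ma]])
      (simp del: condF.simps add: minus_cond[OF ma] ovr_minus_cond[OF mo] inter_cond[OF ri])
qed

lemma part5c: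
  fixes TX :: "'x itself" and TY :: "'y itself"
  shows "\<forall>(m::'a \<Rightarrow> 'a \<Rightarrow> 'a) up i.
      (representable_in TX TY [(PMinus, m), (PUpd, up), (PInter, i)] \<longrightarrow>
         minus_alg_upd (comp_of_minus m) m up \<and> rnb_int (comp_of_minus m) i) \<and>
      (minus_alg_upd (comp_of_minus m) m up \<and> rnb_int (comp_of_minus m) i \<longrightarrow>
         representable_in TYPE('a \<times> 'a) TYPE('a) [(PMinus, m), (PUpd, up), (PInter, i)])"
proof (intro allI conjI impI)
  fix m up i :: "'a \<Rightarrow> 'a \<Rightarrow> 'a"
  assume "representable_in TX TY [(PMinus, m), (PUpd, up), (PInter, i)]"
  then obtain h :: "'a \<Rightarrow> ('x \<rightharpoonup> 'y)" where inj: "inj h"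
    and H: "\<And>s f a b x. (s, f) \<in> set [(PMinus, m), (PUpd, up), (PInter, i)] \<Longrightarrow> h (f a b) x = pt_op s (h a x) (h b x)"
    by (rule rep_D) blast
  have hm: "\<And>a b x. h (m a b) x = pt_op PMinus (h a x) (h b x)" by (rule H) simp
  have hu: "\<And>a b x. h (up a b) x = pt_op PUpd (h a x) (h b x)" by (rule H) simp
  have hi: "\<And>a b x. h (i a b) x = pt_op PInter (h a x) (h b x)" by (rule H) simp
  show "minus_alg_upd (comp_of_minus m) m up" by (rule snd_minus_upd[of h m up, OF inj hm hu])
  show "rnb_int (comp_of_minus m) i"
    by (rule snd_rnb_int[of h "comp_of_minus m" i, OF inj hc_of_hm[of h m, OF hm] hi])
next
  fix m up i :: "'a \<Rightarrow> 'a \<Rightarrow> 'a"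
  assume a: "minus_alg_upd (comp_of_minus m) m up \<and> rnb_int (comp_of_minus m) i"
  then have mu: "minus_alg_upd (comp_of_minus m) m up" and ri: "rnb_int (comp_of_minus m) i" by blast+
  then have ma: "minus_alg (comp_of_minus m) m" unfolding minus_alg_upd_def by blast
  show "representable_in TYPE('a \<times> 'a) TYPE('a) [(PMinus, m), (PUpd, up), (PInter, i)]"
    by (rule points[OF MA_rnb[OF ma]])
      (simp del: condF.simps add: minus_cond[OF ma] upd_minus_cond[OF mu] inter_cond[OF ri])
qed

lemma part6:
  fixes TX :: "'x itself" and TY :: "'y itself"
  shows "\<forall>(c::'a \<Rightarrow> 'a \<Rightarrow> 'a) i ov.
      (representable_in TX TY [(PRes, c), (PInter, i), (POvr, ov)] \<longrightarrow> rnb_int_ovr c i ov) \<and>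
      (rnb_int_ovr c i ov \<longrightarrow>
         representable_in TYPE('a \<times> 'a) TYPE('a) [(PRes, c), (PInter, i), (POvr, ov)])"
proof (intro allI conjI impI)
  fix c i ov :: "'a \<Rightarrow> 'a \<Rightarrow> 'a"
  assume "representable_in TX TY [(PRes, c), (PInter, i), (POvr, ov)]"
  then obtain h :: "'a \<Rightarrow> ('x \<rightharpoonup> 'y)" where inj: "inj h"
    and H: "\<And>s f a b x. (s, f) \<in> set [(PRes, c), (PInter, i), (POvr, ov)] \<Longrightarrow> h (f a b) x = pt_op s (h a x) (h b x)"
    by (rule rep_D) blast
  have hc: "\<And>a b x. h (c a b) x = pt_op PRes (h a x) (h b x)" by (rule H) simp
  have hi: "\<And>a b x. h (i a b) x = pt_op PInter (h a x) (h b x)" by (rule H) simp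
  have ho: "\<And>a b x. h (ov a b) x = pt_op POvr (h a x) (h b x)" by (rule H) simp
  show "rnb_int_ovr c i ov" by (rule snd_rnb_int_ovr[of h c i ov, OF inj hc hi ho])
next
  fix c i ov :: "'a \<Rightarrow> 'a \<Rightarrow> 'a"
  assume ro: "rnb_int_ovr c i ov"
  then have ri: "rnb_int c i" unfolding rnb_int_ovr_def by blast
  then have r: "rnb c" unfolding rnb_int_def by blast
  show "representable_in TYPE('a \<times> 'a) TYPE('a) [(PRes, c), (PInter, i), (POvr, ov)]"
    by (rule points[OF r]) (simp del: condF.simps add: condF_res[OF r] inter_cond[OF ri] ovr_int_cond[OF ro])
qed

lemma part7:
  fixes TX :: "'x itself" and TY :: "'y itself"
  shows "\<forall>(c::'a \<Rightarrow> 'a \<Rightarrow> 'a) i up.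
      (representable_in TX TY [(PRes, c), (PInter, i), (PUpd, up)] \<longrightarrow> rnb_int_upd c i up) \<and>
      (rnb_int_upd c i up \<longrightarrow>
         representable_in TYPE('a \<times> 'a) TYPE('a) [(PRes, c), (PInter, i), (PUpd, up)])"
proof (intro allI conjI impI)
  fix c i up :: "'a \<Rightarrow> 'a \<Rightarrow> 'a"
  assume "representable_in TX TY [(PRes, c), (PInter, i), (PUpd, up)]"
  then obtain h :: "'a \<Rightarrow> ('x \<rightharpoonup> 'y)" where inj: "inj h"
    and H: "\<And>s f a b x. (s, f) \<in> set [(PRes, c), (PInter, i), (PUpd, up)] \<Longrightarrow> h (f a b) x = pt_op s (h a x) (h b x)"
    by (rule rep_D) blast
  have hc: "\<And>a b x. h (c a b) x = pt_op PRes (h a x) (h b x)" by (rule H) simp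
  have hi: "\<And>a b x. h (i a b) x = pt_op PInter (h a x) (h b x)" by (rule H) simp
  have hu: "\<And>a b x. h (up a b) x = pt_op PUpd (h a x) (h b x)" by (rule H) simp
  show "rnb_int_upd c i up" by (rule snd_rnb_int_upd[of h c i up, OF inj hc hi hu])
next
  fix c i up :: "'a \<Rightarrow> 'a \<Rightarrow> 'a"
  assume ru: "rnb_int_upd c i up"
  then have ri: "rnb_int c i" unfolding rnb_int_upd_def by blast
  then have r: "rnb c" unfolding rnb_int_def by blast
  show "representable_in TYPE('a \<times> 'a) TYPE('a) [(PRes, c), (PInter, i), (PUpd, up)]"
    by (rule points[OF r]) (simp del: condF.simps add: condF_res[OF r] inter_cond[OF ri] upd_int_cond[OF ru])
qed


theorem corollary4p5:
  fixes TX :: "'x itself" and TY :: "'y itself"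
  shows
  \<comment> \<open>(1) signature (\<circ>, \<inter>)\<close>
  "(\<forall>(c::'a \<Rightarrow> 'a \<Rightarrow> 'a) i.
      (representable_in TX TY [(PRes, c), (PInter, i)] \<longrightarrow> rnb_int c i) \<and>
      (rnb_int c i \<longrightarrow> representable_in TYPE('a \<times> 'a) TYPE('a) [(PRes, c), (PInter, i)]))
   \<and>
  \<comment> \<open>(2) signature (-)\<close>
   (\<forall>(m::'a \<Rightarrow> 'a \<Rightarrow> 'a).
      (representable_in TX TY [(PMinus, m)] \<longrightarrow> minus_alg (comp_of_minus m) m) \<and>
      (minus_alg (comp_of_minus m) m \<longrightarrow> representable_in TYPE('a \<times> 'a) TYPE('a) [(PMinus, m)]))
   \<and>
  \<comment> \<open>(3) signature (-, \<squnion>)\<close>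
   (\<forall>(m::'a \<Rightarrow> 'a \<Rightarrow> 'a) ov.
      (representable_in TX TY [(PMinus, m), (POvr, ov)] \<longrightarrow> minus_alg_ovr (comp_of_minus m) m ov) \<and>
      (minus_alg_ovr (comp_of_minus m) m ov \<longrightarrow>
         representable_in TYPE('a \<times> 'a) TYPE('a) [(PMinus, m), (POvr, ov)]))
   \<and>
  \<comment> \<open>(4) signature (-, \<diamond>)\<close>
   (\<forall>(m::'a \<Rightarrow> 'a \<Rightarrow> 'a) up.
      (representable_in TX TY [(PMinus, m), (PUpd, up)] \<longrightarrow> minus_alg_upd (comp_of_minus m) m up) \<and>
      (minus_alg_upd (comp_of_minus m) m up \<longrightarrow>
         representable_in TYPE('a \<times> 'a) TYPE('a) [(PMinus, m), (PUpd, up)]))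
   \<and>
  \<comment> \<open>(5a) signature (-, \<inter>)\<close>
   (\<forall>(m::'a \<Rightarrow> 'a \<Rightarrow> 'a) i.
      (representable_in TX TY [(PMinus, m), (PInter, i)] \<longrightarrow>
         minus_alg (comp_of_minus m) m \<and> rnb_int (comp_of_minus m) i) \<and>
      (minus_alg (comp_of_minus m) m \<and> rnb_int (comp_of_minus m) i \<longrightarrow>
         representable_in TYPE('a \<times> 'a) TYPE('a) [(PMinus, m), (PInter, i)]))
   \<and>
  \<comment> \<open>(5b) signature (-, \<squnion>, \<inter>)\<close>
   (\<forall>(m::'a \<Rightarrow> 'a \<Rightarrow> 'a) ov i.
      (representable_in TX TY [(PMinus, m), (POvr, ov), (PInter, i)] \<longrightarrow>
         minus_alg_ovr (comp_of_minus m) m ov \<and> rnb_int (comp_of_minus m) i) \<and>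
      (minus_alg_ovr (comp_of_minus m) m ov \<and> rnb_int (comp_of_minus m) i \<longrightarrow>
         representable_in TYPE('a \<times> 'a) TYPE('a) [(PMinus, m), (POvr, ov), (PInter, i)]))
   \<and>
  \<comment> \<open>(5c) signature (-, \<diamond>, \<inter>)\<close>
   (\<forall>(m::'a \<Rightarrow> 'a \<Rightarrow> 'a) up i.
      (representable_in TX TY [(PMinus, m), (PUpd, up), (PInter, i)] \<longrightarrow>
         minus_alg_upd (comp_of_minus m) m up \<and> rnb_int (comp_of_minus m) i) \<and>
      (minus_alg_upd (comp_of_minus m) m up \<and> rnb_int (comp_of_minus m) i \<longrightarrow>
         representable_in TYPE('a \<times> 'a) TYPE('a) [(PMinus, m), (PUpd, up), (PInter, i)]))
   \<and>
  \<comment> \<open>(6) signature (\<circ>, \<inter>, \<squnion>)\<close>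
   (\<forall>(c::'a \<Rightarrow> 'a \<Rightarrow> 'a) i ov.
      (representable_in TX TY [(PRes, c), (PInter, i), (POvr, ov)] \<longrightarrow> rnb_int_ovr c i ov) \<and>
      (rnb_int_ovr c i ov \<longrightarrow>
         representable_in TYPE('a \<times> 'a) TYPE('a) [(PRes, c), (PInter, i), (POvr, ov)]))
   \<and>
  \<comment> \<open>(7) signature (\<circ>, \<inter>, \<diamond>)\<close>
   (\<forall>(c::'a \<Rightarrow> 'a \<Rightarrow> 'a) i up.
      (representable_in TX TY [(PRes, c), (PInter, i), (PUpd, up)] \<longrightarrow> rnb_int_upd c i up) \<and>
      (rnb_int_upd c i up \<longrightarrow>
         representable_in TYPE('a \<times> 'a) TYPE('a) [(PRes, c), (PInter, i), (PUpd, up)]))"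
  by (rule conjI[OF part1 conjI[OF part2 conjI[OF part3 conjI[OF part4 conjI[OF part5a
      conjI[OF part5b conjI[OF part5c conjI[OF part6 part7]]]]]]]])

end
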